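(* Let $\nu\in\mathbb{C}$. The initial equation admits a unique formal fundamental matrix at the origin of the form $\hat\Phi(x,0)=\hat H(x)\,x^{\Lambda}\exp(-Q/x)$ with $Q=\mathrm{diag}(1,2,0)$, $\Lambda=\mathrm{diag}(0,\nu-2,\nu-4)$ and $$\hat H(x)=\begin{pmatrix}1&x^2\hat\varphi(x)&\frac{x^4\hat\psi(x)}2\\0&1&-\frac{x^2}2\\0&0&1\end{pmatrix},$$ where: (1) if $\nu$ is a non-positive integer, $\hat\psi(x)=1+\nu x+\nu(\nu+1)x^2+\dots+(-1)^\nu(-\nu)!\,x^{-\nu}$ and $\hat\varphi(x)=1-\nu x+\nu(\nu+1)x^2-\dots+(-\nu)!\,x^{-\nu}$ are polynomials (hence analytic at the origin); (2) otherwise $\hat\psi(x)=\sum_{n\ge0}(\nu)^{(n)}x^n$ and $\hat\varphi(x)=\sum_{n\ge0}(-1)^n(\nu)^{(n)}x^n$ are divergent series.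
   Context: $\partial=d/dx$; the initial equation is $L_3L_2L_1y=0$ with $L_1=\partial-\frac1{x^2}$, $L_2=\partial-\frac{\nu-2}{x}-\frac2{x^2}$, $L_3=\partial-\frac{\nu-4}x$. A (formal) fundamental matrix of the equation means one of the system $Y'=A(x)Y$ with $A(x)=\begin{pmatrix}1/x^2&1&0\\0&\frac{\nu-2}x+\frac2{x^2}&1\\0&0&\frac{\nu-4}x\end{pmatrix}$ (equivalently $Y=(y,L_1y,L_2L_1y)^T$). $(\nu)^{(n)}=\nu(\nu+1)\cdots(\nu+n-1)$, $(\nu)^{(0)}=1$. *)

theory Defs
  imports "HOL-Analysis.Analysis" "HOL-Library.Nonpos_Ints"
begin

type_synonym fpsmat = "complex fps ^3^3"

definition mat3 :: "'a::zero \<Rightarrow> 'a \<Rightarrow> 'a \<Rightarrow> 'a \<Rightarrow> 'a \<Rightarrow> 'a \<Rightarrow> 'a \<Rightarrow> 'a \<Rightarrow> 'a \<Rightarrow> 'a^3^3" where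
  "mat3 a11 a12 a13 a21 a22 a23 a31 a32 a33 =
     vector [vector [a11, a12, a13], vector [a21, a22, a23], vector [a31, a32, a33]]"

text \<open>x^2 A(x), where A is the matrix of the system Y' = A Y (entries are polynomials).\<close>
definition x2A :: "complex \<Rightarrow> fpsmat" where
  "x2A \<nu> = mat3 1 (fps_X^2) 0
                0 (fps_const (\<nu> - 2) * fps_X + 2) (fps_X^2)
                0 0 (fps_const (\<nu> - 4) * fps_X)"

definition Qmat :: fpsmat where
  "Qmat = mat3 1 0 0  0 2 0  0 0 0"

definition Lmat :: "complex \<Rightarrow> fpsmat" where
  "Lmat \<nu> = mat3 0 0 0  0 (fps_const (\<nu> - 2)) 0  0 0 (fps_const (\<nu> - 4))"

definition mat_deriv :: "fpsmat \<Rightarrow> fpsmat" where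
  "mat_deriv H = (\<chi> i j. fps_deriv (H $ i $ j))"

definition mat_fps_scale :: "complex fps \<Rightarrow> fpsmat \<Rightarrow> fpsmat" where
  "mat_fps_scale c H = (\<chi> i j. c * (H $ i $ j))"

definition mat_const_term :: "fpsmat \<Rightarrow> complex^3^3" where
  "mat_const_term H = (\<chi> i j. fps_nth (H $ i $ j) 0)"

text \<open>
  Phi = H(x) x^Lambda exp(-Q/x) is a formal solution of Y' = A(x) Y (Lambda, Q diagonal, so
  x^Lambda and exp(-Q/x) commute) iff  H' + H (Lambda/x + Q/x^2) = A H,  i.e. after multiplying
  by x^2:  x^2 H' = (x^2 A) H - H (x Lambda + Q).  It is fundamental iff H(0) is invertible.
\<close>
definition formal_fundamental :: "complex \<Rightarrow> fpsmat \<Rightarrow> bool" where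
  "formal_fundamental \<nu> H \<longleftrightarrow>
     invertible (mat_const_term H) \<and>
     mat_fps_scale (fps_X^2) (mat_deriv H) =
       x2A \<nu> ** H - H ** (mat_fps_scale fps_X (Lmat \<nu>) + Qmat)"

definition psi_hat :: "complex \<Rightarrow> complex fps" where
  "psi_hat \<nu> = Abs_fps (\<lambda>n. pochhammer \<nu> n)"

definition phi_hat :: "complex \<Rightarrow> complex fps" where
  "phi_hat \<nu> = Abs_fps (\<lambda>n. (-1)^n * pochhammer \<nu> n)"

definition H_hat :: "complex \<Rightarrow> fpsmat" where
  "H_hat \<nu> = mat3 1 (fps_X^2 * phi_hat \<nu>) (fps_const (1/2) * fps_X^4 * psi_hat \<nu>)
                  0 1 (- fps_const (1/2) * fps_X^2)
                  0 0 1"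

end

theory Submission
  imports Defs
begin

lemma hom_zero:
  fixes u c :: "complex fps"
  assumes c0: "fps_nth c 0 \<noteq> 0" and e: "fps_X^2 * fps_deriv u = c * u"
  shows "u = 0"
proof -
  have "fps_nth u n = 0" for n
  proof (induction n rule: less_induct)
    case (less n)
    have L: "fps_nth (fps_X^2 * fps_deriv u) n = 0"
    proof (cases "n < 2")
      case True then show ?thesis by (simp add: fps_X_power_mult_nth)
    next
      case False
      then have "n - 1 < n" by simp
      then have "fps_nth u (n - 1) = 0" using less by blast
      moreover have "n - 2 + 1 = n - 1" using False by simp
      ultimately show ?thesis using False by (simp add: fps_X_power_mult_nth)
    qed
    have "fps_nth (c * u) n = (\<Sum>i=0..n. fps_nth c i * fps_nth u (n-i))" by (simp add: fps_mult_nth)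
    also have "\<dots> = fps_nth c 0 * fps_nth u n + (\<Sum>i=1..n. fps_nth c i * fps_nth u (n-i))"
      by (simp add: sum.atLeast_Suc_atMost)
    also have "(\<Sum>i=1..n. fps_nth c i * fps_nth u (n-i)) = 0"
      by (intro sum.neutral) (use less in auto)
    finally have "fps_nth c 0 * fps_nth u n = 0" using L e by simp
    then show ?case using c0 by simp
  qed
  then show ?thesis by (simp add: fps_ext)
qed

lemma uniq:
  fixes g f c r :: "complex fps"
  assumes c0: "fps_nth c 0 \<noteq> 0" and eg: "fps_X^2 * fps_deriv g = c * g + r"
    and ef: "fps_X^2 * fps_deriv f = c * f + r"
  shows "g = f"
proof -
  have "fps_X^2 * fps_deriv (g - f) = c * (g - f)"
    using eg ef by (simp add: algebra_simps)
  then have "g - f = 0" by (rule hom_zero[OF c0])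
  then show ?thesis by simp
qed

lemma const_sol:
  fixes u :: "complex fps"
  assumes "fps_X^2 * fps_deriv u = 0"
  shows "u = fps_const (fps_nth u 0)"
proof -
  have "fps_deriv u = 0" using assms by simp
  then show ?thesis by simp
qed

lemma phi_eq: "phi_hat \<nu> + fps_const \<nu> * (fps_X * phi_hat \<nu>) + fps_X^2 * fps_deriv (phi_hat \<nu>) = 1"
proof (rule fps_ext)
  fix n
  show "fps_nth (phi_hat \<nu> + fps_const \<nu> * (fps_X * phi_hat \<nu>) + fps_X^2 * fps_deriv (phi_hat \<nu>)) n = fps_nth (1::complex fps) n"
  proof (cases n)
    case 0 then show ?thesis by (simp add: phi_hat_def fps_X_power_mult_nth)
  next
    case (Suc k)
    show ?thesis
    proof (cases k)
      case 0 then show ?thesis using Suc by (simp add: phi_hat_def fps_X_power_mult_nth)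
    next
      case (Suc j)
      have "pochhammer \<nu> (Suc (Suc j)) = (\<nu> + of_nat (Suc j)) * pochhammer \<nu> (Suc j)"
        by (rule pochhammer_rec')
      then show ?thesis using Suc \<open>n = Suc k\<close>
        by (simp add: phi_hat_def fps_X_power_mult_nth) (simp add: algebra_simps)
    qed
  qed
qed

lemma psi_eq: "psi_hat \<nu> - fps_const \<nu> * (fps_X * psi_hat \<nu>) - fps_X^2 * fps_deriv (psi_hat \<nu>) = 1"
proof (rule fps_ext)
  fix n
  show "fps_nth (psi_hat \<nu> - fps_const \<nu> * (fps_X * psi_hat \<nu>) - fps_X^2 * fps_deriv (psi_hat \<nu>)) n = fps_nth (1::complex fps) n"
  proof (cases n)
    case 0 then show ?thesis by (simp add: psi_hat_def fps_X_power_mult_nth)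
  next
    case (Suc k)
    show ?thesis
    proof (cases k)
      case 0 then show ?thesis using Suc by (simp add: psi_hat_def fps_X_power_mult_nth)
    next
      case (Suc j)
      have "pochhammer \<nu> (Suc (Suc j)) = (\<nu> + of_nat (Suc j)) * pochhammer \<nu> (Suc j)"
        by (rule pochhammer_rec')
      then show ?thesis using Suc \<open>n = Suc k\<close>
        by (simp add: psi_hat_def fps_X_power_mult_nth) (simp add: algebra_simps)
    qed
  qed
qed

lemma eqn_iff:
  fixes H :: fpsmat and \<nu> :: complex
  defines "h \<equiv> \<lambda>i j. H $ i $ j"
  defines "d2 \<equiv> fps_const (\<nu> - 2) * fps_X + 2"
  defines "d3 \<equiv> fps_const (\<nu> - 4) * fps_X"
  shows "mat_fps_scale (fps_X^2) (mat_deriv H) =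
       x2A \<nu> ** H - H ** (mat_fps_scale fps_X (Lmat \<nu>) + Qmat) \<longleftrightarrow>
   (fps_X^2 * fps_deriv (h 1 1) = fps_X^2 * h 2 1 \<and>
    fps_X^2 * fps_deriv (h 1 2) = h 1 2 + fps_X^2 * h 2 2 - h 1 2 * d2 \<and>
    fps_X^2 * fps_deriv (h 1 3) = h 1 3 + fps_X^2 * h 2 3 - h 1 3 * d3 \<and>
    fps_X^2 * fps_deriv (h 2 1) = d2 * h 2 1 + fps_X^2 * h 3 1 - h 2 1 \<and>
    fps_X^2 * fps_deriv (h 2 2) = fps_X^2 * h 3 2 \<and>
    fps_X^2 * fps_deriv (h 2 3) = d2 * h 2 3 + fps_X^2 * h 3 3 - h 2 3 * d3 \<and>
    fps_X^2 * fps_deriv (h 3 1) = d3 * h 3 1 - h 3 1 \<and>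
    fps_X^2 * fps_deriv (h 3 2) = d3 * h 3 2 - h 3 2 * d2 \<and>
    fps_X^2 * fps_deriv (h 3 3) = 0)"
  unfolding h_def d2_def d3_def
  by (simp add: vec_eq_iff forall_3 matrix_matrix_mult_def sum_3 mat3_def mat_fps_scale_def mat_deriv_def x2A_def Lmat_def Qmat_def algebra_simps)

lemma Hhat_entries:
  "H_hat \<nu> $ 1 $ 1 = 1" "H_hat \<nu> $ 1 $ 2 = fps_X^2 * phi_hat \<nu>"
  "H_hat \<nu> $ 1 $ 3 = fps_const (1/2) * fps_X^4 * psi_hat \<nu>"
  "H_hat \<nu> $ 2 $ 1 = 0" "H_hat \<nu> $ 2 $ 2 = 1" "H_hat \<nu> $ 2 $ 3 = - fps_const (1/2) * fps_X^2"
  "H_hat \<nu> $ 3 $ 1 = 0" "H_hat \<nu> $ 3 $ 2 = 0" "H_hat \<nu> $ 3 $ 3 = 1"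
  by (simp_all add: H_hat_def mat3_def)

lemma half2: "fps_const (1/2::complex) * 2 = 1"
  by (simp add: fps_numeral_fps_const)

lemma fc_sub: "fps_const (\<nu> - 2) = fps_const \<nu> - (2::complex fps)"
  "fps_const (\<nu> - 4) = fps_const \<nu> - (4::complex fps)"
  by (simp_all add: fps_numeral_fps_const)

lemma e12:
  fixes \<phi> :: "complex fps"
  assumes "\<phi> + fps_const \<nu> * (fps_X * \<phi>) + fps_X^2 * fps_deriv \<phi> = 1"
  shows "fps_X^2 * fps_deriv (fps_X^2 * \<phi>) = fps_X^2 * \<phi> + fps_X^2 * 1 - fps_X^2 * \<phi> * (fps_const (\<nu> - 2) * fps_X + 2)"
proof -
  have d: "fps_deriv (fps_X^2 * \<phi>) = 2 * fps_X * \<phi> + fps_X^2 * fps_deriv \<phi>"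
    by (simp add: fps_deriv_power algebra_simps)
  show ?thesis unfolding d fc_sub using assms by algebra
qed

lemma e23:
  fixes \<nu> :: complex
  shows
  "fps_X^2 * fps_deriv (- fps_const (1/2) * fps_X^2) = (fps_const (\<nu> - 2) * fps_X + 2) * (- fps_const (1/2) * fps_X^2) + fps_X^2 * 1 - (- fps_const (1/2) * fps_X^2) * (fps_const (\<nu> - 4) * fps_X)"
proof -
  have d: "fps_deriv (- fps_const (1/2) * fps_X^2 :: complex fps) = - fps_const (1/2) * (2 * fps_X)"
    by (simp add: fps_deriv_power algebra_simps)
  show ?thesis unfolding d fc_sub using half2 by algebra
qed

lemma e13:
  fixes \<psi> :: "complex fps"
  assumes "\<psi> - fps_const \<nu> * (fps_X * \<psi>) - fps_X^2 * fps_deriv \<psi> = 1"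
  shows "fps_X^2 * fps_deriv (fps_const (1/2) * fps_X^4 * \<psi>) = fps_const (1/2) * fps_X^4 * \<psi> + fps_X^2 * (- fps_const (1/2) * fps_X^2) - fps_const (1/2) * fps_X^4 * \<psi> * (fps_const (\<nu> - 4) * fps_X)"
proof -
  have d: "fps_deriv (fps_const (1/2) * fps_X^4 * \<psi>) = fps_const (1/2) * (4 * fps_X^3 * \<psi> + fps_X^4 * fps_deriv \<psi>)"
    by (simp add: fps_deriv_power algebra_simps)
  show ?thesis unfolding d fc_sub using assms by algebra
qed

lemma Hhat_sol: "formal_fundamental \<nu> (H_hat \<nu>) \<and> mat_const_term (H_hat \<nu>) = mat 1"
proof
  have e: "mat_fps_scale (fps_X^2) (mat_deriv (H_hat \<nu>)) =
       x2A \<nu> ** H_hat \<nu> - H_hat \<nu> ** (mat_fps_scale fps_X (Lmat \<nu>) + Qmat)"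
    unfolding eqn_iff Hhat_entries
    using e12[OF phi_eq] e23 e13[OF psi_eq] by simp
  have i: "invertible (mat 1 :: complex^3^3)"
    unfolding invertible_def by (intro exI[of _ "mat 1"]) simp
  show c: "mat_const_term (H_hat \<nu>) = mat 1"
    by (simp add: vec_eq_iff forall_3 mat_const_term_def Hhat_entries mat_def fps_X_power_mult_nth mult.assoc)
  show "formal_fundamental \<nu> (H_hat \<nu>)"
    unfolding formal_fundamental_def c using i e by simp
qed

lemma Hhat_uniq:
  assumes ff: "formal_fundamental \<nu> H" and c: "mat_const_term H = mat 1"
  shows "H = H_hat \<nu>"
proof -
  define d2 where "d2 = fps_const (\<nu> - 2) * fps_X + (2::complex fps)"
  define d3 where "d3 = fps_const (\<nu> - 4) * fps_X"
  have c0: "fps_nth (H $ i $ j) 0 = (if i = j then 1 else 0)" for i j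
  proof -
    have "mat_const_term H $ i $ j = mat 1 $ i $ j" using c by simp
    then show ?thesis by (simp add: mat_const_term_def mat_def)
  qed
  have E: "fps_X^2 * fps_deriv (H$1$1) = fps_X^2 * H$2$1 \<and>
    fps_X^2 * fps_deriv (H$1$2) = H$1$2 + fps_X^2 * H$2$2 - H$1$2 * d2 \<and>
    fps_X^2 * fps_deriv (H$1$3) = H$1$3 + fps_X^2 * H$2$3 - H$1$3 * d3 \<and>
    fps_X^2 * fps_deriv (H$2$1) = d2 * H$2$1 + fps_X^2 * H$3$1 - H$2$1 \<and>
    fps_X^2 * fps_deriv (H$2$2) = fps_X^2 * H$3$2 \<and>
    fps_X^2 * fps_deriv (H$2$3) = d2 * H$2$3 + fps_X^2 * H$3$3 - H$2$3 * d3 \<and>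
    fps_X^2 * fps_deriv (H$3$1) = d3 * H$3$1 - H$3$1 \<and>
    fps_X^2 * fps_deriv (H$3$2) = d3 * H$3$2 - H$3$2 * d2 \<and>
    fps_X^2 * fps_deriv (H$3$3) = 0"
    using ff unfolding formal_fundamental_def eqn_iff d2_def d3_def by blast
  have n2: "fps_nth d2 0 = 2" and n3: "fps_nth d3 0 = 0"
    by (simp_all add: d2_def d3_def)
  have h31: "H$3$1 = 0"
  proof (rule hom_zero[of "d3 - 1"])
    show "fps_nth (d3 - 1) 0 \<noteq> 0" using n3 by simp
    show "fps_X^2 * fps_deriv (H$3$1) = (d3 - 1) * H$3$1" using E by (simp add: algebra_simps)
  qed
  have h32: "H$3$2 = 0"
  proof (rule hom_zero[of "d3 - d2"])
    show "fps_nth (d3 - d2) 0 \<noteq> 0" using n2 n3 by simp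
    show "fps_X^2 * fps_deriv (H$3$2) = (d3 - d2) * H$3$2" using E by (simp add: algebra_simps)
  qed
  have h21: "H$2$1 = 0"
  proof (rule hom_zero[of "d2 - 1"])
    show "fps_nth (d2 - 1) 0 \<noteq> 0" using n2 by simp
    show "fps_X^2 * fps_deriv (H$2$1) = (d2 - 1) * H$2$1" using E h31 by (simp add: algebra_simps)
  qed
  have h11: "H$1$1 = 1"
    using const_sol[of "H$1$1"] E h21 c0[of 1 1] by simp
  have h22: "H$2$2 = 1"
    using const_sol[of "H$2$2"] E h32 c0[of 2 2] by simp
  have h33: "H$3$3 = 1"
    using const_sol[of "H$3$3"] E c0[of 3 3] by simp
  have h23: "H$2$3 = - fps_const (1/2) * fps_X^2"
  proof (rule uniq[of "d2 - d3" _ "fps_X^2"])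
    show "fps_nth (d2 - d3) 0 \<noteq> 0" using n2 n3 by simp
    show "fps_X^2 * fps_deriv (H$2$3) = (d2 - d3) * H$2$3 + fps_X^2" using E h33 by (simp add: algebra_simps)
    show "fps_X^2 * fps_deriv (- fps_const (1/2) * fps_X^2) = (d2 - d3) * (- fps_const (1/2) * fps_X^2) + fps_X^2"
      using e23[of \<nu>] unfolding d2_def d3_def by (simp add: algebra_simps)
  qed
  have h12: "H$1$2 = fps_X^2 * phi_hat \<nu>"
  proof (rule uniq[of "1 - d2" _ "fps_X^2"])
    show "fps_nth (1 - d2) 0 \<noteq> 0" using n2 by simp
    show "fps_X^2 * fps_deriv (H$1$2) = (1 - d2) * H$1$2 + fps_X^2" using E h22 by (simp add: algebra_simps)
    show "fps_X^2 * fps_deriv (fps_X^2 * phi_hat \<nu>) = (1 - d2) * (fps_X^2 * phi_hat \<nu>) + fps_X^2"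
      using e12[OF phi_eq] unfolding d2_def by (simp add: algebra_simps)
  qed
  have h13: "H$1$3 = fps_const (1/2) * fps_X^4 * psi_hat \<nu>"
  proof (rule uniq[of "1 - d3" _ "fps_X^2 * (- fps_const (1/2) * fps_X^2)"])
    show "fps_nth (1 - d3) 0 \<noteq> 0" using n3 by simp
    show "fps_X^2 * fps_deriv (H$1$3) = (1 - d3) * H$1$3 + fps_X^2 * (- fps_const (1/2) * fps_X^2)"
      using E h23 by (simp add: algebra_simps)
    show "fps_X^2 * fps_deriv (fps_const (1/2) * fps_X^4 * psi_hat \<nu>) = (1 - d3) * (fps_const (1/2) * fps_X^4 * psi_hat \<nu>) + fps_X^2 * (- fps_const (1/2) * fps_X^2)"
      using e13[OF psi_eq] unfolding d3_def by (simp add: algebra_simps)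
  qed
  show ?thesis
    by (simp add: vec_eq_iff forall_3 Hhat_entries h11 h12 h13 h21 h22 h23 h31 h32 h33)
qed

lemma poly_part:
  fixes m :: nat and \<nu> :: complex
  assumes "\<nu> = - of_nat m"
  shows "psi_hat \<nu> = fps_of_poly (\<Sum>k\<le>m. monom (pochhammer \<nu> k) k)
        \<and> phi_hat \<nu> = fps_of_poly (\<Sum>k\<le>m. monom ((-1)^k * pochhammer \<nu> k) k)
        \<and> pochhammer \<nu> m = (-1)^m * fact m"
proof (intro conjI)
  have z: "pochhammer \<nu> n = 0" if "n > m" for n
    using that assms by (auto simp: pochhammer_eq_0_iff)
  show "psi_hat \<nu> = fps_of_poly (\<Sum>k\<le>m. monom (pochhammer \<nu> k) k)"
  proof (rule fps_ext)
    fix n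
    show "fps_nth (psi_hat \<nu>) n = fps_nth (fps_of_poly (\<Sum>k\<le>m. monom (pochhammer \<nu> k) k)) n"
      unfolding fps_of_poly_nth coeff_sum coeff_monom
      by (cases "n \<le> m") (simp_all add: psi_hat_def z)
  qed
  show "phi_hat \<nu> = fps_of_poly (\<Sum>k\<le>m. monom ((-1)^k * pochhammer \<nu> k) k)"
  proof (rule fps_ext)
    fix n
    show "fps_nth (phi_hat \<nu>) n = fps_nth (fps_of_poly (\<Sum>k\<le>m. monom ((-1)^k * pochhammer \<nu> k) k)) n"
      unfolding fps_of_poly_nth coeff_sum coeff_monom
      by (cases "n \<le> m") (simp_all add: phi_hat_def z)
  qed
  show "pochhammer \<nu> m = (-1)^m * fact m"
    unfolding assms pochhammer_minus by (simp add: pochhammer_fact)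
qed

lemma radius_zero:
  fixes f :: "nat \<Rightarrow> complex" and \<nu> :: complex
  assumes nu: "\<nu> \<notin> \<int>\<^sub>\<le>\<^sub>0" and nf: "\<And>n. norm (f n) = norm (pochhammer \<nu> n)"
  shows "conv_radius f = 0"
proof (rule conv_radius_ratio_limit_ereal)
  have nz: "pochhammer \<nu> n \<noteq> 0" for n
    using nu by (auto simp: pochhammer_eq_0_iff)
  have nz2: "\<nu> + of_nat n \<noteq> 0" for n
  proof
    assume "\<nu> + of_nat n = 0"
    then have "\<nu> = - of_nat n" by (simp add: eq_neg_iff_add_eq_0)
    with nu show False by simp
  qed
  show "eventually (\<lambda>n. f n \<noteq> 0) sequentially"
  proof (rule always_eventually, intro allI)
    fix n show "f n \<noteq> 0" using nz[of n] nf[of n] by (metis norm_eq_zero)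
  qed
  have r: "norm (f n) / norm (f (Suc n)) = inverse (norm (\<nu> + of_nat n))" for n
  proof -
    have "norm (pochhammer \<nu> n) \<noteq> 0" using nz[of n] by simp
    then show ?thesis unfolding nf pochhammer_rec' norm_mult by (simp add: field_simps)
  qed
  have lim1: "filterlim (\<lambda>n. - norm \<nu> + real n) at_top sequentially"
    by (rule filterlim_tendsto_add_at_top[OF tendsto_const filterlim_real_sequentially])
  have "filterlim (\<lambda>n. norm (\<nu> + of_nat n)) at_top sequentially"
  proof (rule filterlim_at_top_mono[OF lim1])
    show "\<forall>\<^sub>F n in sequentially. - norm \<nu> + real n \<le> norm (\<nu> + of_nat n)"
    proof (intro always_eventually allI)
      fix n
      have "norm (of_nat n :: complex) \<le> norm (\<nu> + of_nat n) + norm \<nu>"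
        using norm_triangle_ineq4[of "\<nu> + of_nat n" \<nu>] by simp
      then show "- norm \<nu> + real n \<le> norm (\<nu> + of_nat n)" by simp
    qed
  qed
  then have "(\<lambda>n. inverse (norm (\<nu> + of_nat n))) \<longlonglongrightarrow> 0"
    by (rule tendsto_inverse_0_at_top)
  then have "(\<lambda>n. ereal (inverse (norm (\<nu> + of_nat n)))) \<longlonglongrightarrow> ereal 0"
    by (simp only: lim_ereal)
  then show "(\<lambda>n. ereal (norm (f n) / norm (f (Suc n)))) \<longlonglongrightarrow> 0"
    by (simp add: r zero_ereal_def)
qed

theorem mainTheorem8:
  fixes \<nu> :: complex
  shows "(\<forall>H. (formal_fundamental \<nu> H \<and> mat_const_term H = mat 1) \<longleftrightarrow> H = H_hat \<nu>)
    \<and> (\<forall>m::nat. \<nu> = - of_nat m \<longrightarrow>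
          psi_hat \<nu> = fps_of_poly (\<Sum>k\<le>m. monom (pochhammer \<nu> k) k)
        \<and> phi_hat \<nu> = fps_of_poly (\<Sum>k\<le>m. monom ((-1)^k * pochhammer \<nu> k) k)
        \<and> pochhammer \<nu> m = (-1)^m * fact m)
    \<and> (\<nu> \<notin> \<int>\<^sub>\<le>\<^sub>0 \<longrightarrow> fps_conv_radius (psi_hat \<nu>) = 0 \<and> fps_conv_radius (phi_hat \<nu>) = 0)"
proof (intro conjI allI impI)
  fix H
  show "(formal_fundamental \<nu> H \<and> mat_const_term H = mat 1) \<longleftrightarrow> H = H_hat \<nu>"
    using Hhat_sol Hhat_uniq by blast
next
  fix m :: nat assume "\<nu> = - of_nat m"
  note P = poly_part[OF this]
  show "psi_hat \<nu> = fps_of_poly (\<Sum>k\<le>m. monom (pochhammer \<nu> k) k)" using P by blast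
  show "phi_hat \<nu> = fps_of_poly (\<Sum>k\<le>m. monom ((-1)^k * pochhammer \<nu> k) k)" using P by blast
  show "pochhammer \<nu> m = (-1)^m * fact m" using P by blast
next
  assume nu: "\<nu> \<notin> \<int>\<^sub>\<le>\<^sub>0"
  show "fps_conv_radius (psi_hat \<nu>) = 0"
    unfolding fps_conv_radius_def psi_hat_def by (rule radius_zero[OF nu]) simp
  show "fps_conv_radius (phi_hat \<nu>) = 0"
    unfolding fps_conv_radius_def phi_hat_def by (rule radius_zero[OF nu]) (simp add: norm_mult norm_power)
qed

end
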